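(* Let $n \ge 1$ and let $X_1,\ldots,X_n$ be independent Rademacher random variables (each $X_i$ takes the values $+1$ and $-1$ with probability $1/2$ each). Then \[ \mathbb{P}\Big(\sum_{i=1}^{n} X_i > \frac{\sqrt{n}}{2}\Big) \ge \frac{3}{32}. \] *)

theory Defs
  imports "HOL-Probability.Probability"
begin

end

theory Submission
  imports Defs
begin

definition D :: "nat set \<Rightarrow> (real \<Rightarrow> real) \<Rightarrow> real" where
  "D I g = (\<Sum>e\<in>PiE I (\<lambda>_. {-1,1::real}). g (\<Sum>j\<in>I. e j))"

lemma D_empty: "D {} g = g 0"
  by (simp add: D_def)

lemma D_insert:
  assumes "finite I" "i \<notin> I"
  shows "D (insert i I) g = D I (\<lambda>u. g (u+1) + g (u-1))"
proof -
  let ?A = "(\<lambda>_::nat. {-1,1::real})"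
  have "D (insert i I) g = (\<Sum>p\<in>?A i \<times> PiE I ?A. g (\<Sum>j\<in>insert i I. ((\<lambda>(y, f). f(i := y)) p) j))"
    unfolding D_def PiE_insert_eq
    by (subst sum.reindex[OF inj_combinator[OF assms(2)]]) (simp add: comp_def)
  also have "\<dots> = (\<Sum>p\<in>?A i \<times> PiE I ?A. (case p of (y,f) \<Rightarrow> g (y + (\<Sum>j\<in>I. f j))))"
  proof (rule sum.cong[OF refl])
    fix p assume "p \<in> ?A i \<times> PiE I ?A"
    obtain y f where p: "p = (y, f)" by fastforce
    have "(\<Sum>j\<in>I. (f(i:=y)) j) = (\<Sum>j\<in>I. f j)"
      using assms(2) by (intro sum.cong) auto
    then show "g (\<Sum>j\<in>insert i I. ((\<lambda>(y, f). f(i := y)) p) j) = (case p of (y,f) \<Rightarrow> g (y + (\<Sum>j\<in>I. f j)))"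
      using assms p by (simp add: sum.insert)
  qed
  also have "\<dots> = (\<Sum>y\<in>?A i. \<Sum>f\<in>PiE I ?A. g (y + (\<Sum>j\<in>I. f j)))"
    by (simp add: sum.cartesian_product)
  also have "\<dots> = (\<Sum>f\<in>PiE I ?A. \<Sum>y\<in>?A i. g (y + (\<Sum>j\<in>I. f j)))"
    by (rule sum.swap)
  also have "\<dots> = D I (\<lambda>u. g (u+1) + g (u-1))"
    unfolding D_def by (intro sum.cong) (auto simp: add.commute)
  finally show ?thesis .
qed

lemma D_add: "D I (\<lambda>u. f u + g u) = D I f + D I g"
  by (simp add: D_def sum.distrib)
lemma D_cmult: "D I (\<lambda>u. c * f u) = c * D I f"
  by (simp add: D_def sum_distrib_left)
lemma D_mono: "(\<And>u. f u \<le> g u) \<Longrightarrow> D I f \<le> D I g"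
  by (simp add: D_def sum_mono)

lemma D_moments:
  assumes "finite I"
  shows "D I (\<lambda>_. 1) = 2 ^ card I \<and> D I (\<lambda>u. u) = 0 \<and> D I (\<lambda>u. u^2) = card I * 2 ^ card I
     \<and> D I (\<lambda>u. u^3) = 0 \<and> D I (\<lambda>u. u^4) = real (3 * card I ^ 2 - 2 * card I) * 2 ^ card I"
  using assms
proof (induction I rule: finite_induct)
  case empty
  then show ?case by (simp add: D_empty)
next
  case (insert i I)
  have e1: "(\<lambda>u::real. 1 + 1::real) = (\<lambda>u. 2 * 1)" by simp
  have e2: "(\<lambda>u::real. (u+1) + (u-1)) = (\<lambda>u. 2 * u)" by (simp add: algebra_simps)
  have e3: "(\<lambda>u::real. (u+1)^2 + (u-1)^2) = (\<lambda>u. 2 * u^2 + 2 * 1)" by (simp add: algebra_simps power2_eq_square)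
  have e4: "(\<lambda>u::real. (u+1)^3 + (u-1)^3) = (\<lambda>u. 2 * u^3 + 6 * u)" by (simp add: algebra_simps power3_eq_cube)
  have e5: "(\<lambda>u::real. (u+1)^4 + (u-1)^4) = (\<lambda>u. 2 * u^4 + (12 * u^2 + 2 * 1))"
    by (rule ext) (simp add: algebra_simps power4_eq_xxxx power2_eq_square)
  have m0: "D (insert i I) (\<lambda>_. 1) = 2 * D I (\<lambda>_. 1)"
    using D_cmult[of I 2 "\<lambda>_. 1"] by (simp add: D_insert[OF insert.hyps])
  have m1: "D (insert i I) (\<lambda>u. u) = 2 * D I (\<lambda>u. u)"
    unfolding D_insert[OF insert.hyps] e2 by (simp only: D_cmult)
  have m2: "D (insert i I) (\<lambda>u. u^2) = 2 * D I (\<lambda>u. u^2) + 2 * D I (\<lambda>_. 1)"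
    unfolding D_insert[OF insert.hyps] e3 by (simp only: D_cmult D_add)
  have m3: "D (insert i I) (\<lambda>u. u^3) = 2 * D I (\<lambda>u. u^3) + 6 * D I (\<lambda>u. u)"
    unfolding D_insert[OF insert.hyps] e4 by (simp only: D_cmult D_add)
  have m4: "D (insert i I) (\<lambda>u. u^4) = 2 * D I (\<lambda>u. u^4) + (12 * D I (\<lambda>u. u^2) + 2 * D I (\<lambda>_. 1))"
    unfolding D_insert[OF insert.hyps] e5 by (simp only: D_cmult D_add)
  have c: "card (insert i I) = card I + 1" using insert.hyps by simp
  have "3 * card I ^ 2 \<ge> 2 * card I" by (cases "card I") (auto simp: power2_eq_square)
  moreover have "3 * (card I + 1) ^ 2 \<ge> 2 * (card I + 1)" by (auto simp: power2_eq_square)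
  ultimately show ?case using insert.IH unfolding m0 m1 m2 m3 m4 c
    by (simp add: of_nat_diff algebra_simps power2_eq_square)
qed

lemma D_sym:
  assumes "finite I"
  shows "D I g = D I (\<lambda>u. g (-u))"
  using assms
proof (induction I arbitrary: g rule: finite_induct)
  case empty
  then show ?case by (simp add: D_empty)
next
  case (insert i I)
  have "D (insert i I) g = D I (\<lambda>u. g (u+1)) + D I (\<lambda>u. g (u-1))"
    using insert by (simp add: D_insert D_add)
  also have "\<dots> = D I (\<lambda>u. g (-u+1)) + D I (\<lambda>u. g (-u-1))"
    using insert.IH[of "\<lambda>u. g (u+1)"] insert.IH[of "\<lambda>u. g (u-1)"] by simp
  also have "\<dots> = D (insert i I) (\<lambda>u. g (-u))"
    using insert by (simp add: D_insert D_add algebra_simps)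
  finally show ?case .
qed


lemma pointwise:
  fixes n :: real and u :: real
  assumes "n > 0"
  shows "u^2 - n/4 - u^4/(8*n) \<le> 2*n * ((if sqrt n / 2 < u then 1 else 0) + (if u < - (sqrt n / 2) then 1 else 0))"
proof -
  have t2: "(sqrt n / 2)^2 = n/4" using assms by (simp add: power_divide)
  show ?thesis
  proof (cases "sqrt n / 2 < \<bar>u\<bar>")
    case True
    have "0 \<le> (u^2 - 4*n)^2" by simp
    then have "u^2 - u^4/(8*n) \<le> 2*n" using assms
      by (simp add: field_simps power2_eq_square power4_eq_xxxx)
    moreover have "(if sqrt n / 2 < u then 1 else 0) + (if u < - (sqrt n / 2) then 1 else 0) = (1::real)"
    proof -
      have s: "0 \<le> sqrt n" using assms by simp
      show ?thesis
      proof (cases "u \<ge> 0")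
        case True
        have a: "sqrt n / 2 < u" using True \<open>sqrt n / 2 < \<bar>u\<bar>\<close> by simp
        have b: "\<not> u < - (sqrt n / 2)" using True s by linarith
        show ?thesis using a b by simp
      next
        case False
        have a: "u < - (sqrt n / 2)" using False \<open>sqrt n / 2 < \<bar>u\<bar>\<close> by simp
        have b: "\<not> sqrt n / 2 < u" using False s by linarith
        show ?thesis using a b by simp
      qed
    qed
    ultimately show ?thesis using assms by simp
  next
    case False
    then have "\<bar>u\<bar> \<le> sqrt n / 2" by linarith
    then have "\<bar>u\<bar>^2 \<le> (sqrt n / 2)^2" by (rule power_mono) simp
    then have "u^2 \<le> (sqrt n / 2)^2" by simp
    then have "u^2 \<le> n/4" using t2 by simp
    moreover have "0 \<le> u^4/(8*n)" using assms by simp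
    moreover have "0 \<le> (if sqrt n / 2 < u then 1 else 0) + (if u < - (sqrt n / 2) then 1 else (0::real))" by simp
    ultimately show ?thesis using assms
      by (smt (verit) mult_nonneg_nonneg)
  qed
qed

lemma comb:
  assumes "finite I" "card I \<ge> 1"
  shows "D I (\<lambda>u. if sqrt (card I) / 2 < u then 1 else 0) \<ge> 3/32 * 2 ^ card I"
proof -
  define n where "n = real (card I)"
  define t where "t = sqrt n / 2"
  have n0: "n > 0" using assms by (simp add: n_def)
  have mom: "D I (\<lambda>_. 1) = 2 ^ card I" "D I (\<lambda>u. u^2) = n * 2 ^ card I"
     "D I (\<lambda>u. u^4) = (3 * n^2 - 2 * n) * 2 ^ card I"
    using D_moments[OF assms(1)] assms by (auto simp: n_def of_nat_diff power2_eq_square)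
  have sym: "D I (\<lambda>u. if u < - t then 1 else 0) = D I (\<lambda>u. if t < u then 1 else 0)"
    using D_sym[OF assms(1), of "\<lambda>u. if u < - t then 1 else 0"] by simp
  have "D I (\<lambda>u. u^2 - n/4 - u^4/(8*n)) \<le> D I (\<lambda>u. 2*n * ((if t < u then 1 else 0) + (if u < - t then 1 else 0)))"
    unfolding t_def by (rule D_mono, rule pointwise[OF n0])
  also have "\<dots> = 2*n * (2 * D I (\<lambda>u. if t < u then 1 else 0))"
    by (simp only: D_cmult D_add sym) simp
  finally have A: "D I (\<lambda>u. u^2 - n/4 - u^4/(8*n)) \<le> 4*n * D I (\<lambda>u. if t < u then 1 else 0)" by simp
  have "D I (\<lambda>u. u^2 - n/4 - u^4/(8*n)) = D I (\<lambda>u. u^2 + ((-n/4) * 1 + (-1/(8*n)) * u^4))"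
    by (rule arg_cong[where f="D I"]) (auto simp: field_simps)
  also have "\<dots> = n * 2 ^ card I - n/4 * 2 ^ card I - (3 * n^2 - 2 * n) * 2 ^ card I / (8*n)"
    by (simp only: D_add D_cmult mom) (simp add: field_simps)
  also have "\<dots> \<ge> 3*n/8 * 2 ^ card I" using n0
    by (simp add: field_simps power2_eq_square)
  finally have "3*n/8 * 2 ^ card I \<le> 4*n * D I (\<lambda>u. if t < u then 1 else 0)" using A by linarith
  then have "(3/32 * 2 ^ card I) * (4*n) \<le> D I (\<lambda>u. if t < u then 1 else 0) * (4*n)"
    by (simp add: algebra_simps)
  then have "3/32 * 2 ^ card I \<le> D I (\<lambda>u. if t < u then 1 else 0)"
    using n0 by (simp only: mult_le_cancel_right_pos)
  then show ?thesis unfolding t_def n_def .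
qed


theorem lemma2:
  fixes M :: "'a measure" and X :: "nat \<Rightarrow> 'a \<Rightarrow> real" and n :: nat
  assumes "prob_space M"
    and "n \<ge> 1"
    and "prob_space.indep_vars M (\<lambda>_. borel) X {1..n}"
    and "\<And>i. i \<in> {1..n} \<Longrightarrow> measure M {\<omega> \<in> space M. X i \<omega> = 1} = 1/2"
    and "\<And>i. i \<in> {1..n} \<Longrightarrow> measure M {\<omega> \<in> space M. X i \<omega> = -1} = 1/2"
  shows "measure M {\<omega> \<in> space M. (\<Sum>i=1..n. X i \<omega>) > sqrt (real n) / 2} \<ge> 3/32"
proof -
  interpret prob_space M by fact
  define I where "I = {1..n}"
  define t where "t = sqrt (real n) / 2"
  define E where "E = PiE I (\<lambda>_. {-1,1::real})"
  define G where "G = {e\<in>E. t < (\<Sum>j\<in>I. e j)}"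
  define B where "B e = {\<omega>\<in>space M. \<forall>i\<in>I. X i \<omega> = e i}" for e
  have finI: "finite I" and cardI: "card I = n" and Ine: "I \<noteq> {}"
    using assms(2) by (auto simp: I_def)
  have rv: "X i \<in> borel_measurable M" if "i \<in> I" for i
    using assms(3) that unfolding indep_vars_def2 I_def by auto
  have ind: "indep_sets (\<lambda>i. { X i -` A \<inter> space M | A. A \<in> sets borel}) I"
    using assms(3) unfolding indep_vars_def2 I_def by auto
  have finE: "finite E" unfolding E_def using finI by (simp add: finite_PiE)
  have Bint: "B e = (\<Inter>i\<in>I. X i -` {e i} \<inter> space M)" for e
    using Ine by (auto simp: B_def)
  have Bsets: "B e \<in> sets M" for e
    unfolding Bint using finI Ine rv by (intro sets.finite_INT) (auto intro: measurable_sets)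
  have probB: "prob (B e) = (1/2) ^ n" if "e \<in> E" for e
  proof -
    have "prob (B e) = (\<Prod>i\<in>I. prob (X i -` {e i} \<inter> space M))"
      unfolding Bint
      using ind finI Ine unfolding indep_sets_def
      by (elim conjE allE[of _ I] impE ballE[of _ _ "\<lambda>i. X i -` {e i} \<inter> space M"]) auto
    also have "\<dots> = (\<Prod>i\<in>I. 1/2)"
    proof (rule prod.cong[OF refl])
      fix i assume i: "i \<in> I"
      have "e i = 1 \<or> e i = -1" using that i by (auto simp: E_def)
      moreover have "X i -` {e i} \<inter> space M = {\<omega> \<in> space M. X i \<omega> = e i}" by auto
      ultimately show "prob (X i -` {e i} \<inter> space M) = 1/2"
        using assms(4,5) i unfolding I_def by auto
    qed
    finally show ?thesis using cardI by simp
  qed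
  have disj: "disjoint_family_on B G"
    unfolding disjoint_family_on_def
  proof (intro ballI impI)
    fix e e' assume "e \<in> G" "e' \<in> G" "e \<noteq> e'"
    then have "e \<in> E" "e' \<in> E" "e \<noteq> e'" unfolding G_def by auto
    then obtain i where "i \<in> I" "e i \<noteq> e' i"
      unfolding E_def by (metis PiE_ext)
    then show "B e \<inter> B e' = {}" by (auto simp: B_def)
  qed
  have sub: "(\<Union>e\<in>G. B e) \<subseteq> {\<omega> \<in> space M. (\<Sum>i=1..n. X i \<omega>) > t}"
  proof
    fix \<omega> assume "\<omega> \<in> (\<Union>e\<in>G. B e)"
    then obtain e where e: "e \<in> G" "\<omega> \<in> B e" by auto
    then have "(\<Sum>i=1..n. X i \<omega>) = (\<Sum>j\<in>I. e j)" by (auto simp: B_def I_def)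
    then show "\<omega> \<in> {\<omega> \<in> space M. (\<Sum>i=1..n. X i \<omega>) > t}"
      using e by (auto simp: G_def B_def)
  qed
  have Tsets: "{\<omega> \<in> space M. (\<Sum>i=1..n. X i \<omega>) > t} \<in> sets M"
  proof -
    have "(\<lambda>\<omega>. \<Sum>i\<in>I. X i \<omega>) \<in> borel_measurable M"
      using rv by (intro borel_measurable_sum) auto
    then show ?thesis unfolding borel_measurable_iff_greater I_def by auto
  qed
  have finG: "finite G" using finE by (simp add: G_def)
  have "prob (\<Union>e\<in>G. B e) = (\<Sum>e\<in>G. prob (B e))"
    using finG disj Bsets by (intro measure_finite_Union) auto
  also have "\<dots> = (\<Sum>e\<in>G. (1/2)^n)"
    using probB by (intro sum.cong) (auto simp: G_def)
  also have "\<dots> = D I (\<lambda>u. if t < u then 1 else 0) / 2 ^ n"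
  proof -
    have "D I (\<lambda>u. if t < u then 1 else 0) = (\<Sum>e\<in>E. if t < (\<Sum>j\<in>I. e j) then 1 else 0)"
      unfolding D_def E_def ..
    also have "\<dots> = (\<Sum>e\<in>G. 1)"
      unfolding G_def using finE by (rule sum.inter_filter[symmetric])
    finally have "D I (\<lambda>u. if t < u then 1 else 0) = real (card G)" by simp
    then show ?thesis by (simp add: power_one_over)
  qed
  also have "\<dots> \<ge> 3/32"
    using comb[OF finI] cardI assms(2) unfolding t_def by (simp add: field_simps)
  finally have "3/32 \<le> prob (\<Union>e\<in>G. B e)" .
  also have "\<dots> \<le> prob {\<omega> \<in> space M. (\<Sum>i=1..n. X i \<omega>) > t}"
    using sub Tsets by (rule finite_measure_mono)
  finally show ?thesis unfolding t_def .
qed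

end
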